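(* For every integer $\ell\geq 1$ there is a first-order prenex sentence $\sigma_\ell$ over $\tau_{\mathsf{ord}}$ with exactly $q^*(\ell)$ quantifiers that separates $L_{\leq\ell}$ from $L_{>\ell}$, and whose quantifier prefix strictly alternates between $\exists$ and $\forall$ and ends with $\forall$.
   Context: Vocabulary $\tau_{\mathsf{ord}} = \langle < ;\ \mathsf{min}, \mathsf{max}\rangle$ with $<$ binary and $\mathsf{min},\mathsf{max}$ constants. For $\ell \geq 1$, $L_\ell$ is the linear order with $\ell+1$ elements (its length is $\ell$), with $\mathsf{min},\mathsf{max}$ interpreted as first and last elements. $L_{\leq \ell}=\{L_1,\dots,L_\ell\}$, $L_{>\ell}=\{L_m: m>\ell\}$. A sentence separates $\mathcal{A}$ from $\mathcal{B}$ if it is true in all structures of $\mathcal{A}$ and false in all of $\mathcal{B}$. Define $q^*_\forall, q^*_\exists : \mathbb{Z}_{\geq 1}\to\mathbb{N}$ by $q^*_\forall(1)=1$, $q^*_\exists(1)=2$, $q^*_\forall(2)=2$, and $q^*_\exists(2\ell) = q^*_\forall(\ell)+1$ ($\ell\geq 1$); $q^*_\exists(2\ell+1) = q^*_\forall(\ell+1)+1$ ($\ell \geq 1$); $q^*_\forall(2\ell) = q^*_\exists(\ell)+1$ ($\ell\geq 2$); $q^*_\forall(2\ell+1) = q^*_\exists(\ell)+1$ ($\ell\geq 1$). Let $q^*(\ell) = \min(q^*_\exists(\ell), q^*_\forall(\ell))$. *)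

theory Defs
  imports Main
begin

text \<open>Terms: variables (indexed by position of the binding quantifier in the prefix),
  and the constants min and max.\<close>
datatype trm = Var nat | Min | Max

datatype qf = Less trm trm | Eq trm trm | TT | FF
  | Neg qf | Conj qf qf | Disj qf qf

datatype quant = Ex | All

text \<open>A prenex formula: a quantifier prefix and a quantifier-free matrix.
  The i-th quantifier of the prefix (counting from 0) binds the variable Var i.\<close>
type_synonym prenex = "quant list \<times> qf"

fun trm_vars :: "trm \<Rightarrow> nat set" where
  "trm_vars (Var i) = {i}"
| "trm_vars Min = {}"
| "trm_vars Max = {}"

fun qf_vars :: "qf \<Rightarrow> nat set" where
  "qf_vars (Less s t) = trm_vars s \<union> trm_vars t"
| "qf_vars (Eq s t) = trm_vars s \<union> trm_vars t"
| "qf_vars TT = {}"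
| "qf_vars FF = {}"
| "qf_vars (Neg f) = qf_vars f"
| "qf_vars (Conj f g) = qf_vars f \<union> qf_vars g"
| "qf_vars (Disj f g) = qf_vars f \<union> qf_vars g"

definition is_sentence :: "prenex \<Rightarrow> bool" where
  "is_sentence \<sigma> \<longleftrightarrow> (\<forall>i\<in>qf_vars (snd \<sigma>). i < length (fst \<sigma>))"

text \<open>Semantics in the linear order L_m, with universe {0..m}, min = 0, max = m,
  and < the usual order. An assignment is the list of values chosen so far.\<close>
fun trm_eval :: "nat \<Rightarrow> nat list \<Rightarrow> trm \<Rightarrow> nat" where
  "trm_eval m xs (Var i) = xs ! i"
| "trm_eval m xs Min = 0"
| "trm_eval m xs Max = m"

fun qf_eval :: "nat \<Rightarrow> nat list \<Rightarrow> qf \<Rightarrow> bool" where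
  "qf_eval m xs (Less s t) = (trm_eval m xs s < trm_eval m xs t)"
| "qf_eval m xs (Eq s t) = (trm_eval m xs s = trm_eval m xs t)"
| "qf_eval m xs TT = True"
| "qf_eval m xs FF = False"
| "qf_eval m xs (Neg f) = (\<not> qf_eval m xs f)"
| "qf_eval m xs (Conj f g) = (qf_eval m xs f \<and> qf_eval m xs g)"
| "qf_eval m xs (Disj f g) = (qf_eval m xs f \<or> qf_eval m xs g)"

fun prefix_eval :: "nat \<Rightarrow> quant list \<Rightarrow> qf \<Rightarrow> nat list \<Rightarrow> bool" where
  "prefix_eval m [] \<phi> xs = qf_eval m xs \<phi>"
| "prefix_eval m (Ex # qs) \<phi> xs = (\<exists>a\<le>m. prefix_eval m qs \<phi> (xs @ [a]))"
| "prefix_eval m (All # qs) \<phi> xs = (\<forall>a\<le>m. prefix_eval m qs \<phi> (xs @ [a]))"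

text \<open>L_m satisfies the prenex sentence sigma (L_m has m+1 elements, length m).\<close>
definition holds_in_L :: "nat \<Rightarrow> prenex \<Rightarrow> bool" where
  "holds_in_L m \<sigma> = prefix_eval m (fst \<sigma>) (snd \<sigma>) []"

definition separates_L :: "nat \<Rightarrow> prenex \<Rightarrow> bool" where
  "separates_L l \<sigma> \<longleftrightarrow>
     (\<forall>m. 1 \<le> m \<and> m \<le> l \<longrightarrow> holds_in_L m \<sigma>) \<and>
     (\<forall>m. l < m \<longrightarrow> \<not> holds_in_L m \<sigma>)"

definition alternating_ending_All :: "quant list \<Rightarrow> bool" where
  "alternating_ending_All qs \<longleftrightarrow> qs \<noteq> [] \<and> last qs = All \<and>
     (\<forall>i. Suc i < length qs \<longrightarrow> qs ! i \<noteq> qs ! Suc i)"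

text \<open>Defined on integers >= 1 as in the paper; the value at 0 is irrelevant.\<close>
function qA :: "nat \<Rightarrow> nat" and qE :: "nat \<Rightarrow> nat" where
  "qA n = (if n \<le> 1 then 1 else if n = 2 then 2 else qE (n div 2) + 1)"
| "qE n = (if n \<le> 1 then 2 else if even n then qA (n div 2) + 1
           else qA (n div 2 + 1) + 1)"
  by pat_completeness auto
termination
  by (relation "measure (case_sum id id)") (auto, presburger)

definition qstar :: "nat \<Rightarrow> nat" where
  "qstar l = min (qE l) (qA l)"

end

theory Submission
  imports Defs
begin

fun qcap :: "nat \<Rightarrow> nat" where
  "qcap 0 = 0"
| "qcap (Suc q) = (if even q then 2 * qcap q + 1 else 2 * qcap q)"

fun qpre :: "nat \<Rightarrow> quant list" where
  "qpre 0 = []"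
| "qpre (Suc q) = (if even q then All else Ex) # qpre q"

fun qform :: "nat \<Rightarrow> nat \<Rightarrow> nat \<Rightarrow> trm \<Rightarrow> trm \<Rightarrow> qf" where
  "qform 0 L d s t = Eq s t"
| "qform (Suc q) L d s t = (if L = 0 then Eq s t else if even q then
     Disj (Neg (Conj (Less s (Var d)) (Less (Var d) t)))
          (Disj (qform q (L div 2) (Suc d) s (Var d)) (qform q ((L - 1) div 2) (Suc d) (Var d) t))
   else Conj (Conj (Less s (Var d)) (Neg (Less t (Var d))))
          (Conj (qform q ((L + 1) div 2) (Suc d) s (Var d)) (qform q (L div 2) (Suc d) (Var d) t)))"

lemma trm_eval_app: "trm_vars s \<subseteq> {..<length xs} \<Longrightarrow> trm_eval m (xs @ ys) s = trm_eval m xs s"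
  by (cases s) (auto simp: nth_append)

lemma qf_eval_app: "qf_vars \<phi> \<subseteq> {..<length xs} \<Longrightarrow> qf_eval m (xs @ ys) \<phi> = qf_eval m xs \<phi>"
  by (induction \<phi>) (auto simp: trm_eval_app)

definition dec :: "nat \<Rightarrow> nat list \<Rightarrow> qf \<Rightarrow> bool \<Rightarrow> bool" where
  "dec m ys \<phi> c \<longleftrightarrow> (\<forall>zs. qf_eval m (ys @ zs) \<phi> = c)"

definition deci :: "nat \<Rightarrow> nat list \<Rightarrow> qf \<Rightarrow> bool" where
  "deci m ys \<phi> \<longleftrightarrow> (\<exists>c. dec m ys \<phi> c)"

lemma dec_app: "dec m ys \<phi> c \<Longrightarrow> dec m (ys @ [w]) \<phi> c"
  unfolding dec_def by (metis append_Cons append_assoc self_append_conv2)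

lemma deci_app: "deci m ys \<phi> \<Longrightarrow> deci m (ys @ [w]) \<phi>"
  unfolding deci_def using dec_app by blast

lemma pe_const: "dec m ys \<phi> c \<Longrightarrow> prefix_eval m qs \<phi> ys = c"
proof (induction qs arbitrary: ys)
  case Nil
  then show ?case unfolding dec_def by (metis append_Nil2 prefix_eval.simps(1))
next
  case (Cons q qs)
  have "\<And>a. prefix_eval m qs \<phi> (ys @ [a]) = c" using Cons dec_app by blast
  then show ?case by (cases q) auto
qed

lemma pe_cong: "(\<And>zs. qf_eval m (ys @ zs) \<phi> = qf_eval m (ys @ zs) \<psi>) \<Longrightarrow>
   prefix_eval m qs \<phi> ys = prefix_eval m qs \<psi> ys"
proof (induction qs arbitrary: ys)
  case Nil
  then show ?case by (metis append_Nil2 prefix_eval.simps(1))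
next
  case (Cons q qs)
  have "\<And>a. prefix_eval m qs \<phi> (ys @ [a]) = prefix_eval m qs \<psi> (ys @ [a])"
    using Cons by (metis append_Cons append_assoc self_append_conv2)
  then show ?case by (cases q) auto
qed

lemma pe_disj_dec: "deci m ys A \<or> deci m ys B \<Longrightarrow>
  prefix_eval m qs (Disj A B) ys = (prefix_eval m qs A ys \<or> prefix_eval m qs B ys)"
proof -
  assume h: "deci m ys A \<or> deci m ys B"
  show ?thesis
  proof (cases "deci m ys A")
    case True
    then obtain c where c: "dec m ys A c" unfolding deci_def by blast
    show ?thesis
    proof (cases c)
      case True
      then have "dec m ys (Disj A B) True" using c unfolding dec_def by auto
      then show ?thesis using pe_const c True by metis
    next
      case False
      then have "prefix_eval m qs (Disj A B) ys = prefix_eval m qs B ys"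
        using c unfolding dec_def by (intro pe_cong) auto
      then show ?thesis using pe_const c False by metis
    qed
  next
    case False
    then obtain c where c: "dec m ys B c" using h unfolding deci_def by blast
    show ?thesis
    proof (cases c)
      case True
      then have "dec m ys (Disj A B) True" using c unfolding dec_def by auto
      then show ?thesis using pe_const c True by metis
    next
      case False
      then have "prefix_eval m qs (Disj A B) ys = prefix_eval m qs A ys"
        using c unfolding dec_def by (intro pe_cong) auto
      then show ?thesis using pe_const c False by metis
    qed
  qed
qed

lemma pe_conj_dec: "deci m ys A \<or> deci m ys B \<Longrightarrow>
  prefix_eval m qs (Conj A B) ys = (prefix_eval m qs A ys \<and> prefix_eval m qs B ys)"
proof -
  assume h: "deci m ys A \<or> deci m ys B"
  show ?thesis
  proof (cases "deci m ys A")
    case True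
    then obtain c where c: "dec m ys A c" unfolding deci_def by blast
    show ?thesis
    proof (cases c)
      case False
      then have "dec m ys (Conj A B) False" using c unfolding dec_def by auto
      then show ?thesis using pe_const c False by metis
    next
      case True
      then have "prefix_eval m qs (Conj A B) ys = prefix_eval m qs B ys"
        using c unfolding dec_def by (intro pe_cong) auto
      then show ?thesis using pe_const c True by metis
    qed
  next
    case False
    then obtain c where c: "dec m ys B c" using h unfolding deci_def by blast
    show ?thesis
    proof (cases c)
      case False
      then have "dec m ys (Conj A B) False" using c unfolding dec_def by auto
      then show ?thesis using pe_const c False by metis
    next
      case True
      then have "prefix_eval m qs (Conj A B) ys = prefix_eval m qs A ys"
        using c unfolding dec_def by (intro pe_cong) auto
      then show ?thesis using pe_const c True by metis
    qed
  qed
qed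

lemma pe_disj_Ex: "(\<And>w. deci m (ys @ [w]) A \<or> deci m (ys @ [w]) B) \<Longrightarrow>
  prefix_eval m (Ex # qs) (Disj A B) ys = (prefix_eval m (Ex # qs) A ys \<or> prefix_eval m (Ex # qs) B ys)"
  using pe_disj_dec by auto

lemma pe_conj_All: "(\<And>w. deci m (ys @ [w]) A \<or> deci m (ys @ [w]) B) \<Longrightarrow>
  prefix_eval m (All # qs) (Conj A B) ys = (prefix_eval m (All # qs) A ys \<and> prefix_eval m (All # qs) B ys)"
  using pe_conj_dec by auto

lemma qform_vars: "qf_vars (qform q L d s t) \<subseteq> trm_vars s \<union> trm_vars t \<union> {d..<d+q}"
proof (induction q arbitrary: L d s t)
  case 0
  then show ?case by simp
next
  case (Suc q)
  have a: "\<And>L s t. qf_vars (qform q L (Suc d) s t) \<subseteq> trm_vars s \<union> trm_vars t \<union> {Suc d..<Suc d+q}"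
    using Suc by blast
  have b: "qf_vars (qform q L' (Suc d) s (Var d)) \<subseteq> trm_vars s \<union> trm_vars t \<union> {d..<d+Suc q}" for L'
    by (rule subset_trans[OF a]) auto
  have c: "qf_vars (qform q L' (Suc d) (Var d) t) \<subseteq> trm_vars s \<union> trm_vars t \<union> {d..<d+Suc q}" for L'
    by (rule subset_trans[OF a]) auto
  have e: "{d} \<subseteq> trm_vars s \<union> trm_vars t \<union> {d..<d+Suc q}" by auto
  show ?case using b c e by (simp only: qform.simps split: if_split) (simp; blast)
qed

lemma qpre_length: "length (qpre q) = q"
  by (induction q) auto

lemma qform_Eq: "q = 0 \<or> L = 0 \<Longrightarrow> qform q L d s t = Eq s t"
  by (cases q) auto

lemma deci_Eq: "trm_vars s \<subseteq> {..<length ys} \<Longrightarrow> trm_vars t \<subseteq> {..<length ys} \<Longrightarrow>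
   deci m ys (Eq s t)"
  unfolding deci_def dec_def using qf_eval_app[of "Eq s t" ys m] by auto

lemma decA:
  assumes "length ys = Suc d" "trm_vars s \<subseteq> {..<d}" "trm_vars t \<subseteq> {..<d}" "even q" "L \<noteq> 0"
    "\<not> (trm_eval m ys s < ys ! d \<and> ys ! d < trm_eval m ys t)"
  shows "dec m ys (qform (Suc q) L d s t) True"
  unfolding dec_def
proof
  fix zs
  have "qf_eval m (ys @ zs) (Conj (Less s (Var d)) (Less (Var d) t)) =
        qf_eval m ys (Conj (Less s (Var d)) (Less (Var d) t))"
    by (rule qf_eval_app) (use assms in auto)
  then show "qf_eval m (ys @ zs) (qform (Suc q) L d s t) = True"
    using assms by simp
qed

lemma decE:
  assumes "length ys = Suc d" "trm_vars s \<subseteq> {..<d}" "trm_vars t \<subseteq> {..<d}" "odd q" "L \<noteq> 0"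
    "\<not> (trm_eval m ys s < ys ! d \<and> \<not> trm_eval m ys t < ys ! d)"
  shows "dec m ys (qform (Suc q) L d s t) False"
  unfolding dec_def
proof
  fix zs
  have "qf_eval m (ys @ zs) (Conj (Less s (Var d)) (Neg (Less t (Var d)))) =
        qf_eval m ys (Conj (Less s (Var d)) (Neg (Less t (Var d))))"
    by (rule qf_eval_app) (use assms in auto)
  then show "qf_eval m (ys @ zs) (qform (Suc q) L d s t) = False"
    using assms by simp
qed

lemma arithA:
  fixes u v m L :: nat
  assumes "L > 0" "u \<le> v" "v \<le> m"
  shows "(\<forall>z\<le>m. \<not> (u < z \<and> z < v) \<or> z - u \<le> L div 2 \<or> v - z \<le> (L - 1) div 2) = (v - u \<le> L)"
proof
  assume h: "\<forall>z\<le>m. \<not> (u < z \<and> z < v) \<or> z - u \<le> L div 2 \<or> v - z \<le> (L - 1) div 2"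
  show "v - u \<le> L"
  proof (rule ccontr)
    assume "\<not> v - u \<le> L"
    then have "u + L div 2 + 1 \<le> m" "u < u + L div 2 + 1" "u + L div 2 + 1 < v" using assms by linarith+
    then show False using h[rule_format, of "u + L div 2 + 1"] assms \<open>\<not> v - u \<le> L\<close> by linarith
  qed
next
  assume "v - u \<le> L"
  then show "\<forall>z\<le>m. \<not> (u < z \<and> z < v) \<or> z - u \<le> L div 2 \<or> v - z \<le> (L - 1) div 2"
    using assms by linarith
qed

lemma arithE:
  fixes u v m L :: nat
  assumes "L > 0" "u < v" "v \<le> m"
  shows "(\<exists>w\<le>m. u < w \<and> w \<le> v \<and> w - u \<le> (L + 1) div 2 \<and> v - w \<le> L div 2) = (v - u \<le> L)"
proof
  assume "\<exists>w\<le>m. u < w \<and> w \<le> v \<and> w - u \<le> (L + 1) div 2 \<and> v - w \<le> L div 2"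
  then obtain w where "u < w" "w \<le> v" "w - u \<le> (L + 1) div 2" "v - w \<le> L div 2" by blast
  then show "v - u \<le> L" by linarith
next
  assume h: "v - u \<le> L"
  show "\<exists>w\<le>m. u < w \<and> w \<le> v \<and> w - u \<le> (L + 1) div 2 \<and> v - w \<le> L div 2"
    by (rule exI[of _ "min v (u + (L + 1) div 2)"]) (use assms h in linarith)
qed

lemma sem:
  "L \<le> qcap q \<Longrightarrow> length xs = d \<Longrightarrow> trm_vars s \<subseteq> {..<d} \<Longrightarrow> trm_vars t \<subseteq> {..<d} \<Longrightarrow>
   trm_eval m xs s \<le> trm_eval m xs t \<Longrightarrow> trm_eval m xs t \<le> m \<Longrightarrow>
   odd q \<or> trm_eval m xs s < trm_eval m xs t \<Longrightarrow>
   prefix_eval m (qpre q) (qform q L d s t) xs = (trm_eval m xs t - trm_eval m xs s \<le> L)"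
proof (induction q arbitrary: L d xs s t)
  case 0
  then show ?case by auto
next
  case (Suc q)
  define u where "u = trm_eval m xs s"
  define v where "v = trm_eval m xs t"
  have uv: "u \<le> v" "v \<le> m" using Suc.prems u_def v_def by auto
  have ev: "\<And>z. trm_eval m (xs @ [z]) s = u" "\<And>z. trm_eval m (xs @ [z]) t = v"
    "\<And>z. (xs @ [z]) ! d = z" "\<And>z. trm_eval m (xs @ [z]) (Var d) = z"
    "\<And>z. length (xs @ [z]) = Suc d"
    using Suc.prems trm_eval_app u_def v_def by auto
  have vs: "trm_vars s \<subseteq> {..<Suc d}" "trm_vars t \<subseteq> {..<Suc d}" "trm_vars (Var d) \<subseteq> {..<Suc d}"
    using Suc.prems by auto
  show ?case
  proof (cases "L = 0")
    case True
    have "deci m xs (Eq s t)" using deci_Eq Suc.prems by auto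
    then obtain c where c: "dec m xs (Eq s t) c" unfolding deci_def by blast
    have "c = (u = v)" using c[unfolded dec_def, rule_format, of "[]"] u_def v_def by simp
    then show ?thesis using pe_const[OF c] True qform_Eq u_def v_def uv by auto
  next
    case Lne: False
    show ?thesis
    proof (cases "even q")
      case qev: True
      define a where "a = L div 2"
      define b where "b = (L - 1) div 2"
      have ab: "a \<le> qcap q" "b \<le> qcap q" using Suc.prems(1) qev a_def b_def by auto
      have key: "prefix_eval m (qpre q) (qform (Suc q) L d s t) (xs @ [z]) =
                 (\<not> (u < z \<and> z < v) \<or> z - u \<le> a \<or> v - z \<le> b)" if zm: "z \<le> m" for z
      proof (cases "u < z \<and> z < v")
        case False
        have "dec m (xs @ [z]) (qform (Suc q) L d s t) True"
          by (rule decA) (use Suc.prems qev Lne False ev in auto)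
        then show ?thesis using pe_const False by metis
      next
        case inside: True
        let ?ys = "xs @ [z]"
        let ?G = "Conj (Less s (Var d)) (Less (Var d) t)"
        let ?Ea = "qform q a (Suc d) s (Var d)"
        let ?Eb = "qform q b (Suc d) (Var d) t"
        have M: "qform (Suc q) L d s t = Disj (Neg ?G) (Disj ?Ea ?Eb)"
          using Lne qev a_def b_def by simp
        have dG: "dec m ?ys (Neg ?G) False"
          unfolding dec_def
        proof
          fix zs
          have "qf_eval m (?ys @ zs) (Neg ?G) = qf_eval m ?ys (Neg ?G)"
            by (rule qf_eval_app) (use vs ev in auto)
          then show "qf_eval m (?ys @ zs) (Neg ?G) = False" using inside ev by simp
        qed
        have s1: "prefix_eval m (qpre q) (qform (Suc q) L d s t) ?ys = prefix_eval m (qpre q) (Disj ?Ea ?Eb) ?ys"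
          using M pe_disj_dec[of m ?ys "Neg ?G"] dG pe_const[OF dG] unfolding deci_def by auto
        have s2: "prefix_eval m (qpre q) (Disj ?Ea ?Eb) ?ys = (prefix_eval m (qpre q) ?Ea ?ys \<or> prefix_eval m (qpre q) ?Eb ?ys)"
        proof (cases q)
          case 0
          then show ?thesis using pe_disj_dec qform_Eq deci_Eq vs ev by metis
        next
          case (Suc q2)
          then have q2: "odd q2" "qpre q = Ex # qpre q2" using qev by auto
          have "deci m (?ys @ [w]) ?Ea \<or> deci m (?ys @ [w]) ?Eb" for w
          proof -
            have ev2: "trm_eval m (?ys @ [w]) s = u" "trm_eval m (?ys @ [w]) t = v"
              "trm_eval m (?ys @ [w]) (Var d) = z" "(?ys @ [w]) ! Suc d = w" "length (?ys @ [w]) = Suc (Suc d)"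
              using ev vs trm_eval_app[of _ ?ys] by (auto simp: nth_append)
            show ?thesis
            proof (cases "a = 0 \<or> b = 0")
              case True
              then show ?thesis using qform_Eq deci_Eq ev2 vs by (metis deci_app ev(5))
            next
              case False
              show ?thesis
              proof (cases "w \<le> z")
                case True
                have "dec m (?ys @ [w]) ?Eb False" unfolding Suc
                  by (rule decE) (use ev2 vs q2 False True in auto)
                then show ?thesis unfolding deci_def by blast
              next
                case wz: False
                have "dec m (?ys @ [w]) ?Ea False" unfolding Suc
                  by (rule decE) (use ev2 vs q2 False wz in auto)
                then show ?thesis unfolding deci_def by blast
              qed
            qed
          qed
          then show ?thesis unfolding q2 by (rule pe_disj_Ex)
        qed
        have ia: "prefix_eval m (qpre q) ?Ea ?ys = (z - u \<le> a)"
          using Suc.IH[of a ?ys "Suc d" s "Var d"] ab vs ev inside zm by auto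
        have ib: "prefix_eval m (qpre q) ?Eb ?ys = (v - z \<le> b)"
          using Suc.IH[of b ?ys "Suc d" "Var d" t] ab vs ev inside uv by auto
        show ?thesis using s1 s2 ia ib inside by auto
      qed
      have "prefix_eval m (qpre (Suc q)) (qform (Suc q) L d s t) xs =
            (\<forall>z\<le>m. \<not> (u < z \<and> z < v) \<or> z - u \<le> a \<or> v - z \<le> b)"
        using qev key by auto
      also have "\<dots> = (v - u \<le> L)" unfolding a_def b_def by (rule arithA) (use Lne uv in auto)
      finally show ?thesis using u_def v_def by simp
    next
      case qod: False
      define a where "a = (L + 1) div 2"
      define b where "b = L div 2"
      have ab: "a \<le> qcap q" "b \<le> qcap q" using Suc.prems(1) qod a_def b_def by auto
      have ult: "u < v" using Suc.prems qod u_def v_def by auto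
      have key: "prefix_eval m (qpre q) (qform (Suc q) L d s t) (xs @ [w]) =
                 (u < w \<and> w \<le> v \<and> w - u \<le> a \<and> v - w \<le> b)" if wm: "w \<le> m" for w
      proof (cases "u < w \<and> w \<le> v")
        case False
        have "dec m (xs @ [w]) (qform (Suc q) L d s t) False"
          by (rule decE) (use Suc.prems qod Lne False ev in auto)
        then show ?thesis using pe_const False by metis
      next
        case inside: True
        let ?ys = "xs @ [w]"
        let ?G = "Conj (Less s (Var d)) (Neg (Less t (Var d)))"
        let ?Ra = "qform q a (Suc d) s (Var d)"
        let ?Rb = "qform q b (Suc d) (Var d) t"
        have M: "qform (Suc q) L d s t = Conj ?G (Conj ?Ra ?Rb)"
          using Lne qod a_def b_def by simp
        have dG: "dec m ?ys ?G True"
          unfolding dec_def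
        proof
          fix zs
          have "qf_eval m (?ys @ zs) ?G = qf_eval m ?ys ?G"
            by (rule qf_eval_app) (use vs ev in auto)
          then show "qf_eval m (?ys @ zs) ?G = True" using inside ev by auto
        qed
        have s1: "prefix_eval m (qpre q) (qform (Suc q) L d s t) ?ys = prefix_eval m (qpre q) (Conj ?Ra ?Rb) ?ys"
          using M pe_conj_dec[of m ?ys ?G] dG pe_const[OF dG] unfolding deci_def by auto
        obtain q2 where Suc: "q = Suc q2" using qod by (cases q) auto
        then have q2: "even q2" "qpre q = All # qpre q2" using qod by auto
        have "deci m (?ys @ [y]) ?Ra \<or> deci m (?ys @ [y]) ?Rb" for y
        proof -
          have ev2: "trm_eval m (?ys @ [y]) s = u" "trm_eval m (?ys @ [y]) t = v"
            "trm_eval m (?ys @ [y]) (Var d) = w" "(?ys @ [y]) ! Suc d = y" "length (?ys @ [y]) = Suc (Suc d)"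
            using ev vs trm_eval_app[of _ ?ys] by (auto simp: nth_append)
          show ?thesis
          proof (cases "a = 0 \<or> b = 0")
            case True
            then show ?thesis using qform_Eq deci_Eq ev2 vs by (metis deci_app ev(5))
          next
            case False
            show ?thesis
            proof (cases "y \<le> w")
              case True
              have "dec m (?ys @ [y]) ?Rb True" unfolding Suc
                by (rule decA) (use ev2 vs q2 False True in auto)
              then show ?thesis unfolding deci_def by blast
            next
              case yw: False
              have "dec m (?ys @ [y]) ?Ra True" unfolding Suc
                by (rule decA) (use ev2 vs q2 False yw in auto)
              then show ?thesis unfolding deci_def by blast
            qed
          qed
        qed
        then have s2: "prefix_eval m (qpre q) (Conj ?Ra ?Rb) ?ys = (prefix_eval m (qpre q) ?Ra ?ys \<and> prefix_eval m (qpre q) ?Rb ?ys)"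
          unfolding q2 by (rule pe_conj_All)
        have ia: "prefix_eval m (qpre q) ?Ra ?ys = (w - u \<le> a)"
          using Suc.IH[of a ?ys "Suc d" s "Var d"] ab vs ev inside wm qod by auto
        have ib: "prefix_eval m (qpre q) ?Rb ?ys = (v - w \<le> b)"
          using Suc.IH[of b ?ys "Suc d" "Var d" t] ab vs ev inside uv qod by auto
        show ?thesis using s1 s2 ia ib inside by auto
      qed
      have "prefix_eval m (qpre (Suc q)) (qform (Suc q) L d s t) xs =
            (\<exists>w\<le>m. u < w \<and> w \<le> v \<and> w - u \<le> a \<and> v - w \<le> b)"
        using qod key by auto
      also have "\<dots> = (v - u \<le> L)" unfolding a_def b_def by (rule arithE) (use Lne uv ult in auto)
      finally show ?thesis using u_def v_def by simp
    qed
  qed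
qed

lemma qA_1: "qA 1 = 1" by (subst qA.simps) simp
lemma qE_1: "qE 1 = 2" by (subst qE.simps) simp
lemma qA_2: "qA 2 = 2" by (subst qA.simps) simp
lemma qA_ge3: "3 \<le> l \<Longrightarrow> qA l = qE (l div 2) + 1" by (subst qA.simps) simp
lemma qE_ev: "2 \<le> l \<Longrightarrow> even l \<Longrightarrow> qE l = qA (l div 2) + 1" by (subst qE.simps) simp
lemma qE_od: "2 \<le> l \<Longrightarrow> odd l \<Longrightarrow> qE l = qA (l div 2 + 1) + 1" by (subst qE.simps) simp

lemma qcap_ge: "2 * qcap q \<le> qcap (Suc q)" by simp
lemma qcap_ev: "even q \<Longrightarrow> qcap (Suc q) = 2 * qcap q + 1" by simp

lemma arith_main: "1 \<le> l \<Longrightarrow> l \<le> qcap (qA l) \<and> l \<le> qcap (qE l) \<and> (odd (qE l) \<longrightarrow> l < qcap (qE l))"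
proof (induction l rule: less_induct)
  case (less l)
  show ?case
  proof (cases "l \<le> 2")
    case True
    then have "l = 1 \<or> l = 2" using less.prems by auto
    then show ?thesis
    proof
      assume "l = 1" then show ?thesis
        by (simp add: qA_1 qE_1 numeral_2_eq_2)
    next
      assume l2: "l = 2"
      have "qE 2 = 2" using qE_ev[of 2] qA_1 by simp
      then show ?thesis using l2 qA_2 by (simp add: numeral_2_eq_2)
    qed
  next
    case False
    define k where "k = l div 2"
    have k1: "1 \<le> k" "k < l" using False k_def by auto
    show ?thesis
    proof (cases "even l")
      case True
      have lk: "l = 2 * k" using True k_def by auto
      have A: "qA l = qE k + 1" using qA_ge3 False k_def by auto
      have E: "qE l = qA k + 1" using qE_ev False True k_def by auto
      have ih: "k \<le> qcap (qA k)" "k \<le> qcap (qE k)" using less.IH[OF k1(2) k1(1)] by auto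
      have "l \<le> qcap (qA l)" using A qcap_ge[of "qE k"] ih lk by auto
      moreover have "l \<le> qcap (qE l)" using E qcap_ge[of "qA k"] ih lk by auto
      moreover have "odd (qE l) \<longrightarrow> l < qcap (qE l)" using E qcap_ev[of "qA k"] ih lk by auto
      ultimately show ?thesis by blast
    next
      case False2: False
      have lk: "l = 2 * k + 1" using False2 k_def by auto
      have k2: "k + 1 < l" "1 \<le> k + 1" using k1 lk by auto
      have A: "qA l = qE k + 1" using qA_ge3 False k_def by auto
      have E: "qE l = qA (k + 1) + 1" using qE_od False False2 k_def by auto
      have ih: "k \<le> qcap (qE k)" "odd (qE k) \<longrightarrow> k < qcap (qE k)" using less.IH[OF k1(2) k1(1)] by auto
      have ih2: "k + 1 \<le> qcap (qA (k + 1))" using less.IH[OF k2] by auto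
      have "l \<le> qcap (qA l)"
      proof (cases "even (qE k)")
        case True then show ?thesis using A qcap_ev[of "qE k"] ih lk by auto
      next
        case False then show ?thesis using A qcap_ge[of "qE k"] ih lk by auto
      qed
      moreover have "l \<le> qcap (qE l)" "l < qcap (qE l)" using E qcap_ge[of "qA (k+1)"] ih2 lk by auto
      ultimately show ?thesis by blast
    qed
  qed
qed

lemma qpre_alt: "q \<ge> 1 \<Longrightarrow> alternating_ending_All (qpre q)"
proof (induction q)
  case 0 then show ?case by simp
next
  case (Suc q)
  show ?case
  proof (cases q)
    case 0 then show ?thesis by (simp add: alternating_ending_All_def)
  next
    case (Suc q2)
    have ih: "alternating_ending_All (qpre q)" using Suc.IH Suc by simp
    have hd: "qpre q ! 0 = (if even q2 then All else Ex)" using Suc by simp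
    show ?thesis unfolding alternating_ending_All_def
    proof (intro conjI allI impI)
      show "qpre (Suc q) \<noteq> []" by simp
      show "last (qpre (Suc q)) = All" using ih Suc unfolding alternating_ending_All_def by simp
      fix i assume i: "Suc i < length (qpre (Suc q))"
      show "qpre (Suc q) ! i \<noteq> qpre (Suc q) ! Suc i"
      proof (cases i)
        case 0 then show ?thesis using hd Suc by auto
      next
        case (Suc j)
        then show ?thesis using ih i unfolding alternating_ending_All_def by (simp add: qpre_length)
      qed
    qed
  qed
qed

theorem mainTheorem4:
  fixes l :: nat
  assumes "l \<ge> 1"
  shows "\<exists>\<sigma> :: prenex. is_sentence \<sigma> \<and> length (fst \<sigma>) = qstar l \<and>
           separates_L l \<sigma> \<and> alternating_ending_All (fst \<sigma>)"
proof -
  define q where "q = qstar l"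
  have cap: "l \<le> qcap q" using arith_main[OF assms] unfolding q_def qstar_def min_def by auto
  have q1: "q \<ge> 1"
  proof (rule ccontr)
    assume "\<not> q \<ge> 1" then have "q = 0" by simp
    then show False using cap assms by simp
  qed
  define \<sigma> where "\<sigma> = (qpre q, qform q l 0 Min Max)"
  have hold: "holds_in_L m \<sigma> = (m \<le> l)" if "1 \<le> m" for m
    using sem[OF cap, of "[]" 0 Min Max m] that unfolding holds_in_L_def \<sigma>_def by auto
  have "is_sentence \<sigma>"
    using qform_vars[of q l 0 Min Max] unfolding is_sentence_def \<sigma>_def by (auto simp: qpre_length)
  moreover have "length (fst \<sigma>) = qstar l" unfolding \<sigma>_def q_def by (simp add: qpre_length)
  moreover have "separates_L l \<sigma>" unfolding separates_L_def using hold assms by auto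
  moreover have "alternating_ending_All (fst \<sigma>)" unfolding \<sigma>_def using qpre_alt q1 by simp
  ultimately show ?thesis by blast
qed

end
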